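(* Let $\Omega\subset\mathbb{R}^n$ be a bounded open set, let $f:\Omega\to\mathbb{R}$ be a bounded function, and let $\lambda>0$. Define the extensions $f^{-}_{\overline\Omega},f^{+}_{\overline\Omega}:\overline\Omega\to\mathbb{R}$ and $f^{-}_{\mathbb{R}^n},f^{+}_{\mathbb{R}^n}:\mathbb{R}^n\to\mathbb{R}$ by $f^{\pm}_{\overline\Omega}(x)=f(x)$ for $x\in\Omega$, $f^{-}_{\overline\Omega}(x)=\inf_\Omega f$ and $f^{+}_{\overline\Omega}(x)=\sup_\Omega f$ for $x\in\partial\Omega$; $f^{\pm}_{\mathbb{R}^n}(x)=f(x)$ for $x\in\Omega$, $f^{-}_{\mathbb{R}^n}(x)=\inf_\Omega f$ and $f^{+}_{\mathbb{R}^n}(x)=\sup_\Omega f$ for $x\in\mathbb{R}^n\setminus\Omega$. Then for every $x\in\overline\Omega$: $$M_{\lambda,\Omega}(f^{-}_{\overline\Omega})(x)=M_\lambda(f^{-}_{\mathbb{R}^n})(x),\qquad M^{\lambda}_{\Omega}(f^{+}_{\overline\Omega})(x)=M^{\lambda}(f^{+}_{\mathbb{R}^n})(x),$$ $$M^{\lambda}_{\Omega}(M_{\lambda,\Omega}(f^{-}_{\overline\Omega}))(x)=M^{\lambda}(M_{\lambda}(f^{-}_{\mathbb{R}^n}))(x),\qquad M_{\lambda,\Omega}(M^{\lambda}_{\Omega}(f^{+}_{\overline\Omega}))(x)=M_{\lambda}(M^{\lambda}(f^{+}_{\mathbb{R}^n}))(x),$$ and consequently $$C^l_{\lambda,\Omega}(f^{-}_{\overline\Omega})(x)=C^l_\lambda(f^{-}_{\mathbb{R}^n})(x),\qquad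 C^u_{\lambda,\Omega}(f^{+}_{\overline\Omega})(x)=C^u_\lambda(f^{+}_{\mathbb{R}^n})(x).$$ Moreover, with $O_f=\sup_\Omega f-\inf_\Omega f$: (i) If $x\in\Omega$ satisfies $\mathrm{dist}^2(x,\partial\Omega)>O_f/\lambda$ and $z_x\in\overline\Omega$ satisfies $M_{\lambda,\Omega}(f^{-}_{\overline\Omega})(x)=f^{-}_{\overline\Omega}(z_x)+\lambda|z_x-x|^2$ [respectively $M^{\lambda}_{\Omega}(f^{+}_{\overline\Omega})(x)=f^{+}_{\overline\Omega}(z_x)-\lambda|z_x-x|^2$], then $z_x\in\Omega$. (ii) If $x\in\Omega$ satisfies $\mathrm{dist}^2(x,\partial\Omega)>4O_f/\lambda$ and $z_x\in\overline\Omega$ satisfies $M^{\lambda}_{\Omega}(M_{\lambda,\Omega}(f^{-}_{\overline\Omega}))(x)=M_{\lambda,\Omega}(f^{-}_{\overline\Omega})(z_x)-\lambda|z_x-x|^2$ [respectively $M_{\lambda,\Omega}(M^{\lambda}_{\Omega}(f^{+}_{\overline\Omega}))(x)=M^{\lambda}_{\Omega}(f^{+}_{\overline\Omega})(z_x)+\lambda|z_x-x|^2$], then $z_x\in\Omega$, and any $y_x\in\overline\Omega$ with $M_{\lambda,\Omega}(f^{-}_{\overline\Omega})(z_x)=f^{-}_{\overline\Omega}(y_x)+\lambda|y_x-z_x|^2$ [respectively $M^{\lambda}_{\Omega}(f^{+}_{\overline\Omega})(z_x)=f^{+}_{\overline\Omega}(y_x)-\lambda|y_x-z_x|^2$] satisfies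 $y_x\in\Omega$.
   Context: For a bounded $g:\mathbb{R}^n\to\mathbb{R}$ and $\lambda>0$, the lower and upper Moreau envelopes are $M_\lambda(g)(x)=\inf_{y\in\mathbb{R}^n}\{g(y)+\lambda|y-x|^2\}$ and $M^\lambda(g)(x)=\sup_{y\in\mathbb{R}^n}\{g(y)-\lambda|y-x|^2\}$. For bounded $g:\overline\Omega\to\mathbb{R}$ and $x\in\overline\Omega$, $M_{\lambda,\Omega}(g)(x)=\inf_{y\in\overline\Omega}\{g(y)+\lambda|y-x|^2\}$ and $M^{\lambda}_{\Omega}(g)(x)=\sup_{y\in\overline\Omega}\{g(y)-\lambda|y-x|^2\}$. $\mathrm{co}[h]$ denotes the convex envelope (largest convex function below $h$). The compensated convex transforms are $C^l_\lambda(g)(x)=\mathrm{co}[g+\lambda|\cdot|^2](x)-\lambda|x|^2$ and $C^u_\lambda(g)(x)=\lambda|x|^2-\mathrm{co}[\lambda|\cdot|^2-g](x)$, and the local ones are $C^l_{\lambda,\Omega}(g)=M^{\lambda}_{\Omega}(M_{\lambda,\Omega}(g))$ and $C^u_{\lambda,\Omega}(g)=M_{\lambda,\Omega}(M^{\lambda}_{\Omega}(g))$ on $\overline\Omega$. $\mathrm{dist}(x,A)=\inf_{y\in A}|x-y|$. *)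

theory Defs
  imports "HOL-Analysis.Analysis"
begin

definition Mlow :: "real \<Rightarrow> ('a::real_normed_vector \<Rightarrow> real) \<Rightarrow> 'a \<Rightarrow> real" where
  "Mlow lam g x = (INF y. g y + lam * (norm (y - x))^2)"

definition Mup :: "real \<Rightarrow> ('a::real_normed_vector \<Rightarrow> real) \<Rightarrow> 'a \<Rightarrow> real" where
  "Mup lam g x = (SUP y. g y - lam * (norm (y - x))^2)"

definition MlowOn :: "'a set \<Rightarrow> real \<Rightarrow> ('a::real_normed_vector \<Rightarrow> real) \<Rightarrow> 'a \<Rightarrow> real" where
  "MlowOn S lam g x = (INF y\<in>S. g y + lam * (norm (y - x))^2)"

definition MupOn :: "'a set \<Rightarrow> real \<Rightarrow> ('a::real_normed_vector \<Rightarrow> real) \<Rightarrow> 'a \<Rightarrow> real" where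
  "MupOn S lam g x = (SUP y\<in>S. g y - lam * (norm (y - x))^2)"

definition convex_envelope :: "('a::real_vector \<Rightarrow> real) \<Rightarrow> 'a \<Rightarrow> real" where
  "convex_envelope h x = (SUP g\<in>{g. convex_on UNIV g \<and> (\<forall>y. g y \<le> h y)}. g x)"

definition Cl :: "real \<Rightarrow> ('a::real_normed_vector \<Rightarrow> real) \<Rightarrow> 'a \<Rightarrow> real" where
  "Cl lam g x = convex_envelope (\<lambda>y. g y + lam * (norm y)^2) x - lam * (norm x)^2"

definition Cu :: "real \<Rightarrow> ('a::real_normed_vector \<Rightarrow> real) \<Rightarrow> 'a \<Rightarrow> real" where
  "Cu lam g x = lam * (norm x)^2 - convex_envelope (\<lambda>y. lam * (norm y)^2 - g y) x"

definition ClOn :: "'a set \<Rightarrow> real \<Rightarrow> ('a::real_normed_vector \<Rightarrow> real) \<Rightarrow> 'a \<Rightarrow> real" where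
  "ClOn S lam g = MupOn S lam (MlowOn S lam g)"

definition CuOn :: "'a set \<Rightarrow> real \<Rightarrow> ('a::real_normed_vector \<Rightarrow> real) \<Rightarrow> 'a \<Rightarrow> real" where
  "CuOn S lam g = MlowOn S lam (MupOn S lam g)"

text \<open>Extensions of f from Omega: by inf (resp. sup) of f over Omega outside Omega.
  Restricted to the closure of Omega this is f^-_{closure}, on all of the space it is f^-_{R^n}.\<close>
definition ext_lower :: "'a set \<Rightarrow> ('a \<Rightarrow> real) \<Rightarrow> 'a \<Rightarrow> real" where
  "ext_lower \<Omega> f x = (if x \<in> \<Omega> then f x else Inf (f ` \<Omega>))"

definition ext_upper :: "'a set \<Rightarrow> ('a \<Rightarrow> real) \<Rightarrow> 'a \<Rightarrow> real" where
  "ext_upper \<Omega> f x = (if x \<in> \<Omega> then f x else Sup (f ` \<Omega>))"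

end

theory Submission
  imports Defs
begin

lemma sq_ident:
  fixes x z :: "'a::real_inner"
  shows "(norm (z - x))^2 = (norm z)^2 - 2 * (z \<bullet> x) + (norm x)^2"
  by (simp add: power2_norm_eq_inner inner_diff_left inner_diff_right inner_commute)

lemma subgrad:
  fixes h :: "'a::euclidean_space \<Rightarrow> real"
  assumes "convex_on UNIV h"
  shows "\<exists>p. \<forall>y. h x + p \<bullet> (y - x) \<le> h y"
proof -
  let ?T = "{(y, t). h y < t}"
  have cT: "convex ?T"
    unfolding convex_alt
  proof (intro ballI allI impI)
    fix q1 q2 and u :: real
    assume q: "q1 \<in> ?T" "q2 \<in> ?T" "0 \<le> u \<and> u \<le> 1"
    obtain y1 t1 y2 t2 where qq: "q1 = (y1, t1)" "q2 = (y2, t2)" by (cases q1, cases q2) auto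
    have a: "h y1 < t1" "h y2 < t2" "0 \<le> u" "u \<le> 1" using q qq by auto
    have "h ((1 - u) *\<^sub>R y1 + u *\<^sub>R y2) \<le> (1 - u) * h y1 + u * h y2"
      using convex_onD[OF assms] a by simp
    moreover have "(1 - u) * h y1 + u * h y2 < (1 - u) * t1 + u * t2"
    proof (cases "u = 0")
      case True then show ?thesis using a by simp
    next
      case False
      then have "u * h y2 < u * t2" using a by simp
      moreover have "(1 - u) * h y1 \<le> (1 - u) * t1" using a by (simp add: mult_left_mono)
      ultimately show ?thesis by linarith
    qed
    ultimately show "(1 - u) *\<^sub>R q1 + u *\<^sub>R q2 \<in> ?T" using qq by simp
  qed
  have cS: "convex {(x, h x)}" by simp
  obtain a b where ab: "a \<noteq> 0" "\<forall>q\<in>{(x, h x)}. inner a q \<le> b" "\<forall>q\<in>?T. inner a q \<ge> b"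
  proof -
    have "{(x, h x)} \<inter> ?T = {}" by auto
    moreover have "(x, h x + 1) \<in> ?T" by simp
    then have "?T \<noteq> {}" by blast
    ultimately have "?T \<noteq> {}" "{(x, h x)} \<noteq> {}" "{(x, h x)} \<inter> ?T = {}" by auto
    from separating_hyperplane_sets[OF cS cT this(2,1,3)] show ?thesis using that by blast
  qed
  obtain p s where ps: "a = (p, s)" by (cases a)
  have b1: "p \<bullet> x + s * h x \<le> b" using ab(2) ps by simp
  have b2: "\<And>y t. h y < t \<Longrightarrow> b \<le> p \<bullet> y + s * t" using ab(3) ps by auto
  have "s \<ge> 0"
    using b1 b2[of x "h x + 1"] by (simp add: algebra_simps)
  moreover have "s \<noteq> 0"
  proof
    assume s0: "s = 0"
    then have "p \<noteq> 0" using ab(1) ps by (auto simp: zero_prod_def)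
    have "b \<le> p \<bullet> (x - p)" using b2[of "x - p" "h (x - p) + 1"] s0 by simp
    then have "p \<bullet> p \<le> 0" using b1 s0 by (simp add: inner_diff_right)
    then show False using \<open>p \<noteq> 0\<close> by (metis inner_gt_zero_iff not_le)
  qed
  ultimately have sp: "s > 0" by simp
  show ?thesis
  proof (intro exI allI)
    fix y
    have "s * h x - p \<bullet> (y - x) \<le> s * h y"
    proof (rule field_le_epsilon)
      fix e :: real assume "0 < e"
      have "b \<le> p \<bullet> y + s * (h y + e / s)" using b2[of y "h y + e / s"] \<open>0 < e\<close> sp by simp
      then show "s * h x - p \<bullet> (y - x) \<le> s * h y + e"
        using b1 sp by (simp add: inner_diff_right algebra_simps)
    qed
    then have "h x - (p \<bullet> (y - x)) / s \<le> h y" using sp by (simp add: field_simps)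
    then show "h x + (- (1 / s) *\<^sub>R p) \<bullet> (y - x) \<le> h y" by simp
  qed
qed


lemma aff_ident:
  fixes w z :: "'a::real_inner"
  shows "(norm w)^2 - (norm (z - w))^2 = 2 * (z \<bullet> w) - (norm z)^2"
  using sq_ident[of z w] by simp

lemma Cl_eq:
  fixes g :: "'a::euclidean_space \<Rightarrow> real"
  assumes gm: "\<And>y. m \<le> g y" and gM: "\<And>y. g y \<le> M" and lam: "lam > 0"
  shows "Cl lam g x = Mup lam (Mlow lam g) x"
proof -
  define G where "G = Mlow lam g"
  have Gbdd: "bdd_below (range (\<lambda>y. g y + lam * (norm (y - z))^2))" for z
    by (rule bdd_belowI2[where m=m]) (use gm lam in \<open>smt (verit) zero_le_power2 mult_nonneg_nonneg\<close>)
  have Gle: "G z \<le> g y + lam * (norm (y - z))^2" for z y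
    unfolding G_def Mlow_def by (rule cINF_lower[OF Gbdd]) simp
  have Gm: "m \<le> G z" for z
    unfolding G_def Mlow_def
    by (rule cINF_greatest) (use gm lam in \<open>auto intro: add_increasing2\<close>)
  have GM: "G z \<le> M" for z using Gle[of z z] gM[of z] by simp
  define A where "A = (\<lambda>x. Mup lam G x + lam * (norm x)^2)"
  have Abdd: "bdd_above (range (\<lambda>z. G z - lam * (norm (z - x))^2))" for x
    by (rule bdd_aboveI2[where M=M]) (use GM lam in \<open>smt (verit) zero_le_power2 mult_nonneg_nonneg\<close>)
  have Aup: "G z - lam * (norm (z - x))^2 \<le> Mup lam G x" for x z
    unfolding Mup_def by (rule cSUP_upper[OF _ Abdd]) simp
  have MupG: "Mup lam G y \<le> g y" for y
    unfolding Mup_def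
  proof (rule cSUP_least)
    fix z
    show "G z - lam * (norm (z - y))^2 \<le> g y"
      using Gle[of z y] by (simp add: norm_minus_commute)
  qed simp
  have AleP: "A y \<le> g y + lam * (norm y)^2" for y
    using MupG[of y] unfolding A_def by simp
  have Aconv: "convex_on UNIV A"
  proof (rule convex_onI)
    fix t :: real and x y :: 'a
    assume t: "0 < t" "t < 1"
    define w where "w = (1 - t) *\<^sub>R x + t *\<^sub>R y"
    have "Mup lam G w \<le> (1 - t) * A x + t * A y - lam * (norm w)^2"
      unfolding Mup_def
    proof (rule cSUP_least)
      fix z
      have e1: "G z - lam * (norm (z - w))^2 = G z + lam * (2 * (z \<bullet> w) - (norm z)^2) - lam * (norm w)^2"
        using arg_cong[OF aff_ident[of w z], of "\<lambda>u. lam * u"] by (simp add: algebra_simps)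
      have e2: "z \<bullet> w = (1 - t) * (z \<bullet> x) + t * (z \<bullet> y)"
        unfolding w_def by (simp add: inner_add_right)
      have ex: "G z + lam * (2 * (z \<bullet> x) - (norm z)^2) = G z - lam * (norm (z - x))^2 + lam * (norm x)^2"
        using arg_cong[OF aff_ident[of x z], of "\<lambda>u. lam * u"] by (simp add: algebra_simps)
      have ey: "G z + lam * (2 * (z \<bullet> y) - (norm z)^2) = G z - lam * (norm (z - y))^2 + lam * (norm y)^2"
        using arg_cong[OF aff_ident[of y z], of "\<lambda>u. lam * u"] by (simp add: algebra_simps)
      have "G z + lam * (2 * (z \<bullet> w) - (norm z)^2)
          = (1 - t) * (G z + lam * (2 * (z \<bullet> x) - (norm z)^2)) + t * (G z + lam * (2 * (z \<bullet> y) - (norm z)^2))"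
        unfolding e2 by (simp add: algebra_simps)
      also have "\<dots> \<le> (1 - t) * A x + t * A y"
      proof -
        have "(1 - t) * (G z + lam * (2 * (z \<bullet> x) - (norm z)^2)) \<le> (1 - t) * A x"
          unfolding ex A_def using Aup[of z x] t by (intro mult_left_mono) auto
        moreover have "t * (G z + lam * (2 * (z \<bullet> y) - (norm z)^2)) \<le> t * A y"
          unfolding ey A_def using Aup[of z y] t by (intro mult_left_mono) auto
        ultimately show ?thesis by linarith
      qed
      finally show "G z - lam * (norm (z - w))^2 \<le> (1 - t) * A x + t * A y - lam * (norm w)^2"
        unfolding e1 by linarith
    qed simp
    then show "A ((1 - t) *\<^sub>R x + t *\<^sub>R y) \<le> (1 - t) * A x + t * A y"
      unfolding A_def w_def by simp
  qed simp
  let ?E = "{h. convex_on UNIV h \<and> (\<forall>y. h y \<le> g y + lam * (norm y)^2)}"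
  have Ebdd: "bdd_above ((\<lambda>h. h x) ` ?E)"
    by (rule bdd_aboveI2[where M="g x + lam * (norm x)^2"]) auto
  have Ene: "?E \<noteq> {}"
  proof -
    have "(\<lambda>_. m) \<in> ?E"
      using gm lam by (auto simp: convex_on_const intro: add_increasing2)
    then show ?thesis by blast
  qed
  have "A x \<le> convex_envelope (\<lambda>y. g y + lam * (norm y)^2) x"
    unfolding convex_envelope_def
    by (rule cSUP_upper[OF _ Ebdd]) (use Aconv AleP in auto)
  moreover have "convex_envelope (\<lambda>y. g y + lam * (norm y)^2) x \<le> A x"
    unfolding convex_envelope_def
  proof (rule cSUP_least[OF Ene])
    fix h assume "h \<in> ?E"
    then have hc: "convex_on UNIV h" and hle: "\<And>y. h y \<le> g y + lam * (norm y)^2" by auto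
    obtain p where p: "\<And>y. h x + p \<bullet> (y - x) \<le> h y" using subgrad[OF hc] by blast
    define z where "z = (1 / (2 * lam)) *\<^sub>R p"
    have pz: "p = (2 * lam) *\<^sub>R z" unfolding z_def using lam by simp
    have "h x - lam * (norm x)^2 + lam * (norm (z - x))^2 \<le> G z"
      unfolding G_def Mlow_def
    proof (rule cINF_greatest)
      fix y
      have "h x + p \<bullet> (y - x) \<le> g y + lam * (norm y)^2" using p[of y] hle[of y] by linarith
      then show "h x - lam * (norm x)^2 + lam * (norm (z - x))^2 \<le> g y + lam * (norm (y - z))^2"
        unfolding pz sq_ident[of z x] sq_ident[of y z]
        by (simp add: inner_diff_right inner_commute algebra_simps)
    qed simp
    then have "h x \<le> G z - lam * (norm (z - x))^2 + lam * (norm x)^2" by simp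
    also have "\<dots> \<le> A x" unfolding A_def using Aup[of z x] by simp
    finally show "h x \<le> A x" .
  qed
  ultimately show ?thesis unfolding Cl_def A_def G_def by simp
qed


lemma MlowOn_ge:
  assumes "S \<noteq> {}" "\<And>y. y \<in> S \<Longrightarrow> a \<le> g y" "lam \<ge> 0"
  shows "a \<le> MlowOn S lam g x"
  unfolding MlowOn_def
  by (rule cINF_greatest) (use assms in \<open>auto intro: add_increasing2\<close>)

lemma MlowOn_le:
  assumes "y \<in> S" "\<And>y. y \<in> S \<Longrightarrow> a \<le> g y" "lam \<ge> 0"
  shows "MlowOn S lam g x \<le> g y + lam * (norm (y - x))^2"
  unfolding MlowOn_def
  by (rule cINF_lower[OF bdd_belowI2[where m=a]]) (use assms in \<open>auto intro: add_increasing2\<close>)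

lemma MupOn_le:
  assumes "S \<noteq> {}" "\<And>y. y \<in> S \<Longrightarrow> g y \<le> b" "lam \<ge> 0"
  shows "MupOn S lam g x \<le> b"
proof -
  have "g y - lam * (norm (y - x))^2 \<le> b" if "y \<in> S" for y
  proof -
    have "0 \<le> lam * (norm (y - x))^2" using assms by simp
    then show ?thesis using assms(2)[OF that] by linarith
  qed
  then show ?thesis unfolding MupOn_def by (intro cSUP_least) (use assms in auto)
qed

lemma MupOn_ge:
  assumes "y \<in> S" "\<And>y. y \<in> S \<Longrightarrow> g y \<le> b" "lam \<ge> 0"
  shows "g y - lam * (norm (y - x))^2 \<le> MupOn S lam g x"
proof -
  have "g y - lam * (norm (y - x))^2 \<le> b" if "y \<in> S" for y
  proof -
    have "0 \<le> lam * (norm (y - x))^2" using assms by simp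
    then show ?thesis using assms(2)[OF that] by linarith
  qed
  then show ?thesis unfolding MupOn_def by (intro cSUP_upper[OF _ bdd_aboveI2[where M=b]]) (use assms in auto)
qed

lemma Mlow_On: "Mlow lam g = MlowOn UNIV lam g"
  unfolding Mlow_def MlowOn_def by simp

lemma Mup_On: "Mup lam g = MupOn UNIV lam g"
  unfolding Mup_def MupOn_def by simp

lemma frontier_pt:
  fixes \<Omega> :: "'a::euclidean_space set"
  assumes "open \<Omega>" "x \<in> closure \<Omega>" "y \<notin> \<Omega>"
  shows "\<exists>w\<in>frontier \<Omega>. norm (w - x) \<le> norm (y - x)"
proof (cases "x \<in> \<Omega>")
  case False
  then have "x \<in> frontier \<Omega>" using assms by (simp add: frontier_def interior_open)
  then show ?thesis by (intro bexI[of _ x]) auto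
next
  case True
  have "closed_segment x y \<inter> frontier \<Omega> \<noteq> {}"
    by (rule connected_Int_frontier) (use True assms in auto)
  then obtain w where "w \<in> closed_segment x y" "w \<in> frontier \<Omega>" by blast
  then show ?thesis using dist_in_closed_segment[of w x y]
    by (auto simp: dist_norm norm_minus_commute)
qed

lemma frontier_out:
  assumes "open \<Omega>" "w \<in> frontier \<Omega>"
  shows "w \<notin> \<Omega>" "w \<in> closure \<Omega>"
  using assms by (auto simp: frontier_def interior_open)

lemma GEN:
  fixes \<Omega> :: "'a::euclidean_space set" and k :: "'a \<Rightarrow> real"
  assumes op: "open \<Omega>" and x: "x \<in> closure \<Omega>" and kc: "\<And>y. y \<notin> \<Omega> \<Longrightarrow> k y = c"
    and ka: "\<And>y. a \<le> k y" and kb: "\<And>y. k y \<le> b" and lam: "lam > 0"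
  shows "MlowOn (closure \<Omega>) lam k x = Mlow lam k x" "MupOn (closure \<Omega>) lam k x = Mup lam k x"
proof -
  have ne: "closure \<Omega> \<noteq> {}" using x by force
  have key: "\<exists>w\<in>closure \<Omega>. k w = k y \<and> (norm (w - x))^2 \<le> (norm (y - x))^2" if "y \<notin> closure \<Omega>" for y
  proof -
    have "y \<notin> \<Omega>" using that closure_subset by blast
    then obtain w where w: "w \<in> frontier \<Omega>" "norm (w - x) \<le> norm (y - x)"
      using frontier_pt[OF op x] by blast
    then show ?thesis using frontier_out[OF op w(1)] kc \<open>y \<notin> \<Omega>\<close>
      by (metis norm_ge_zero power_mono)
  qed
  show "MlowOn (closure \<Omega>) lam k x = Mlow lam k x"
  proof (rule antisym)
    show "MlowOn (closure \<Omega>) lam k x \<le> Mlow lam k x"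
      unfolding Mlow_def
    proof (rule cINF_greatest)
      fix y
      show "MlowOn (closure \<Omega>) lam k x \<le> k y + lam * (norm (y - x))^2"
      proof (cases "y \<in> closure \<Omega>")
        case True then show ?thesis using MlowOn_le[of y "closure \<Omega>" a k lam x] ka lam by auto
      next
        case False
        then obtain w where w: "w \<in> closure \<Omega>" "k w = k y" "(norm (w - x))^2 \<le> (norm (y - x))^2"
          using key by blast
        have "MlowOn (closure \<Omega>) lam k x \<le> k w + lam * (norm (w - x))^2"
          using MlowOn_le[of w "closure \<Omega>" a k lam x] ka lam w by auto
        also have "\<dots> \<le> k y + lam * (norm (y - x))^2" using w lam by (simp add: mult_left_mono)
        finally show ?thesis .
      qed
    qed simp
    show "Mlow lam k x \<le> MlowOn (closure \<Omega>) lam k x"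
      unfolding Mlow_On MlowOn_def
      by (rule cINF_superset_mono[OF ne bdd_belowI2[where m=a]]) (use ka lam in \<open>auto intro: add_increasing2\<close>)
  qed
  show "MupOn (closure \<Omega>) lam k x = Mup lam k x"
  proof (rule antisym)
    show "Mup lam k x \<le> MupOn (closure \<Omega>) lam k x"
      unfolding Mup_def
    proof (rule cSUP_least)
      fix y
      show "k y - lam * (norm (y - x))^2 \<le> MupOn (closure \<Omega>) lam k x"
      proof (cases "y \<in> closure \<Omega>")
        case True then show ?thesis using MupOn_ge[of y "closure \<Omega>" k b lam x] kb lam by auto
      next
        case False
        then obtain w where w: "w \<in> closure \<Omega>" "k w = k y" "(norm (w - x))^2 \<le> (norm (y - x))^2"
          using key by blast
        have "k y - lam * (norm (y - x))^2 \<le> k w - lam * (norm (w - x))^2"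
          using w lam by (simp add: mult_left_mono)
        also have "\<dots> \<le> MupOn (closure \<Omega>) lam k x"
          using MupOn_ge[of w "closure \<Omega>" k b lam x] kb lam w by auto
        finally show ?thesis .
      qed
    qed simp
    show "MupOn (closure \<Omega>) lam k x \<le> Mup lam k x"
      unfolding Mup_On MupOn_def
      by (rule cSUP_subset_mono[OF ne bdd_aboveI2[where M=b]]) (use kb lam in \<open>auto simp: diff_le_eq intro: add_increasing2\<close>)
  qed
qed


lemma lower_main:
  fixes \<Omega> :: "'a::euclidean_space set" and f :: "'a \<Rightarrow> real"
  assumes op: "open \<Omega>" and ne: "\<Omega> \<noteq> {}" and bf: "bounded (f ` \<Omega>)" and lam: "lam > 0"
  shows "\<forall>x\<in>closure \<Omega>. MlowOn (closure \<Omega>) lam (ext_lower \<Omega> f) x = Mlow lam (ext_lower \<Omega> f) x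
      \<and> MupOn (closure \<Omega>) lam (MlowOn (closure \<Omega>) lam (ext_lower \<Omega> f)) x = Mup lam (Mlow lam (ext_lower \<Omega> f)) x
      \<and> ClOn (closure \<Omega>) lam (ext_lower \<Omega> f) x = Cl lam (ext_lower \<Omega> f) x"
  and "\<forall>x\<in>\<Omega>. \<forall>z\<in>closure \<Omega>. (infdist x (frontier \<Omega>))^2 > (Sup (f ` \<Omega>) - Inf (f ` \<Omega>)) / lam \<longrightarrow>
        MlowOn (closure \<Omega>) lam (ext_lower \<Omega> f) x = ext_lower \<Omega> f z + lam * (norm (z - x))^2 \<longrightarrow> z \<in> \<Omega>"
  and "\<forall>x\<in>\<Omega>. \<forall>z\<in>closure \<Omega>. (infdist x (frontier \<Omega>))^2 > 4 * (Sup (f ` \<Omega>) - Inf (f ` \<Omega>)) / lam \<longrightarrow>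
        MupOn (closure \<Omega>) lam (MlowOn (closure \<Omega>) lam (ext_lower \<Omega> f)) x
          = MlowOn (closure \<Omega>) lam (ext_lower \<Omega> f) z - lam * (norm (z - x))^2 \<longrightarrow>
        z \<in> \<Omega> \<and> (\<forall>y\<in>closure \<Omega>. MlowOn (closure \<Omega>) lam (ext_lower \<Omega> f) z
                  = ext_lower \<Omega> f y + lam * (norm (y - z))^2 \<longrightarrow> y \<in> \<Omega>)"
proof -
  define e where "e = ext_lower \<Omega> f"
  define m where "m = Inf (f ` \<Omega>)"
  define M where "M = Sup (f ` \<Omega>)"
  have ba: "bdd_above (f ` \<Omega>)" and bb: "bdd_below (f ` \<Omega>)"
    using bf by (auto intro: bounded_imp_bdd_above bounded_imp_bdd_below)
  have mM: "m \<le> M" unfolding m_def M_def using ne ba bb by (intro cInf_le_cSup) auto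
  have eout: "e y = m" if "y \<notin> \<Omega>" for y using that unfolding e_def m_def ext_lower_def by simp
  have em: "m \<le> e y" for y
    using bb mM unfolding e_def m_def ext_lower_def by (auto intro: cInf_lower)
  have eM: "e y \<le> M" for y
    using ba mM unfolding e_def m_def M_def ext_lower_def by (auto intro: cSup_upper)
  have fM: "e y \<le> M" "m \<le> e y" for y using em eM by auto
  have cne: "closure \<Omega> \<noteq> {}" using ne closure_subset by blast
  have lam0: "lam \<ge> 0" using lam by simp
  define G where "G = Mlow lam e"
  have Gm: "m \<le> G y" for y unfolding G_def Mlow_On by (rule MlowOn_ge) (use em lam0 in auto)
  have Gle: "G y \<le> e y" for y
    using MlowOn_le[of y UNIV m e lam y] em lam0 unfolding G_def Mlow_On by simp
  have GM: "G y \<le> M" for y using Gle eM order_trans by blast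
  have Gout: "G y = m" if "y \<notin> \<Omega>" for y using Gm Gle eout that by (metis antisym)
  define H where "H = MlowOn (closure \<Omega>) lam e"
  have HG: "H y = G y" if "y \<in> closure \<Omega>" for y
    unfolding H_def G_def using GEN(1)[OF op that eout em eM lam] .
  have Hm: "m \<le> H y" for y unfolding H_def by (rule MlowOn_ge[OF cne]) (use em lam0 in auto)
  have Hle: "H y \<le> e y" if "y \<in> closure \<Omega>" for y
    using MlowOn_le[OF that, of m e lam y] em lam0 unfolding H_def by simp
  have part1: "MlowOn (closure \<Omega>) lam e x = Mlow lam e x
      \<and> MupOn (closure \<Omega>) lam H x = Mup lam G x
      \<and> ClOn (closure \<Omega>) lam e x = Cl lam e x" if x: "x \<in> closure \<Omega>" for x
  proof -
    have 1: "MlowOn (closure \<Omega>) lam e x = Mlow lam e x" using GEN(1)[OF op x eout em eM lam] .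
    have "MupOn (closure \<Omega>) lam H x = MupOn (closure \<Omega>) lam G x"
      unfolding MupOn_def using HG by simp
    also have "\<dots> = Mup lam G x" using GEN(2)[OF op x Gout Gm GM lam] .
    finally have 2: "MupOn (closure \<Omega>) lam H x = Mup lam G x" .
    have 3: "ClOn (closure \<Omega>) lam e x = Cl lam e x"
      using 2 Cl_eq[of m e M lam x] em eM lam unfolding ClOn_def H_def G_def by simp
    show ?thesis using 1 2 3 by blast
  qed
  have dfr: "infdist x (frontier \<Omega>) \<le> norm (z - x)" if "z \<notin> \<Omega>" "z \<in> closure \<Omega>" for x z
  proof -
    have "z \<in> frontier \<Omega>" using that op by (simp add: frontier_def interior_open)
    then show ?thesis using infdist_le[of z "frontier \<Omega>" x] by (simp add: dist_norm norm_minus_commute)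
  qed
  have dsq: "(infdist x (frontier \<Omega>))^2 \<le> (norm (z - x))^2" if "z \<notin> \<Omega>" "z \<in> closure \<Omega>" for x z
    using dfr[OF that, of x] infdist_nonneg by (intro power_mono) auto
  have part2: "z \<in> \<Omega>" if x: "x \<in> \<Omega>" and z: "z \<in> closure \<Omega>"
      and d: "(infdist x (frontier \<Omega>))^2 > (M - m) / lam"
      and eq: "MlowOn (closure \<Omega>) lam e x = e z + lam * (norm (z - x))^2" for x z
  proof (rule ccontr)
    assume zn: "z \<notin> \<Omega>"
    have "M - m < lam * (infdist x (frontier \<Omega>))^2" using d lam by (simp add: pos_divide_less_eq mult.commute)
    also have "\<dots> \<le> lam * (norm (z - x))^2" using dsq[OF zn z, of x] lam by (simp add: mult_left_mono)
    finally have "M < MlowOn (closure \<Omega>) lam e x" using eq eout[OF zn] by simp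
    moreover have "MlowOn (closure \<Omega>) lam e x \<le> e x"
      using MlowOn_le[of x "closure \<Omega>" m e lam x] x closure_subset em lam0 by auto
    ultimately show False using eM[of x] by simp
  qed
  have part3: "z \<in> \<Omega> \<and> (\<forall>y\<in>closure \<Omega>. H z = e y + lam * (norm (y - z))^2 \<longrightarrow> y \<in> \<Omega>)"
    if x: "x \<in> \<Omega>" and z: "z \<in> closure \<Omega>"
      and dh: "(infdist x (frontier \<Omega>))^2 > 4 * (M - m) / lam"
      and eq: "MupOn (closure \<Omega>) lam H x = H z - lam * (norm (z - x))^2" for x z
  proof -
    define dd where "dd = infdist x (frontier \<Omega>)"
    have d0: "dd \<ge> 0" unfolding dd_def by (rule infdist_nonneg)
    have d4: "4 * (M - m) < lam * dd^2" using dh lam unfolding dd_def by (simp add: pos_divide_less_eq mult.commute)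
    have xc: "x \<in> closure \<Omega>" using x closure_subset by blast
    have "H x - lam * (norm (x - x))^2 \<le> MupOn (closure \<Omega>) lam H x"
      by (rule MupOn_ge[OF xc, where b=M]) (use Hle eM lam0 order_trans in blast)+
    then have "H x \<le> H z - lam * (norm (z - x))^2" using eq by simp
    moreover have "H z \<le> M" using Hle[OF z] eM order_trans by blast
    ultimately have zx: "lam * (norm (z - x))^2 \<le> M - m" using Hm[of x] by linarith
    have zin: "z \<in> \<Omega>"
    proof (rule ccontr)
      assume zn: "z \<notin> \<Omega>"
      have "lam * dd^2 \<le> lam * (norm (z - x))^2" using dsq[OF zn z, of x] lam unfolding dd_def by (simp add: mult_left_mono)
      then show False using zx d4 mM by (smt (verit))
    qed
    have zx2: "norm (z - x) < dd / 2"
    proof (rule ccontr)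
      assume "\<not> norm (z - x) < dd / 2"
      then have "(dd/2)^2 \<le> (norm (z - x))^2" using d0 by (intro power_mono) auto
      then have "lam * (dd/2)^2 \<le> lam * (norm (z - x))^2" using lam by (simp add: mult_left_mono)
      then show False using zx d4 mM by (simp add: power_divide)
    qed
    have yin: "y \<in> \<Omega>" if y: "y \<in> closure \<Omega>" and eqy: "H z = e y + lam * (norm (y - z))^2" for y
    proof (rule ccontr)
      assume yn: "y \<notin> \<Omega>"
      have "dd \<le> norm (y - x)" using dfr[OF yn y, of x] unfolding dd_def .
      moreover have "norm (y - x) \<le> norm (y - z) + norm (z - x)"
        using norm_triangle_ineq[of "y - z" "z - x"] by simp
      ultimately have "dd / 2 < norm (y - z)" using zx2 by linarith
      then have "(dd/2)^2 < (norm (y - z))^2" using d0 by (intro power_strict_mono) auto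
      then have "lam * (dd/2)^2 < lam * (norm (y - z))^2" using lam by simp
      then have "M - m < lam * (norm (y - z))^2" using d4 by (simp add: power_divide)
      then have "M < H z" using eqy eout[OF yn] by simp
      moreover have "H z \<le> M" using Hle[OF z] eM order_trans by blast
      ultimately show False by simp
    qed
    show ?thesis using zin yin by blast
  qed
  show "\<forall>x\<in>closure \<Omega>. MlowOn (closure \<Omega>) lam (ext_lower \<Omega> f) x = Mlow lam (ext_lower \<Omega> f) x
      \<and> MupOn (closure \<Omega>) lam (MlowOn (closure \<Omega>) lam (ext_lower \<Omega> f)) x = Mup lam (Mlow lam (ext_lower \<Omega> f)) x
      \<and> ClOn (closure \<Omega>) lam (ext_lower \<Omega> f) x = Cl lam (ext_lower \<Omega> f) x"
    using part1 unfolding e_def H_def G_def by blast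
  show "\<forall>x\<in>\<Omega>. \<forall>z\<in>closure \<Omega>. (infdist x (frontier \<Omega>))^2 > (Sup (f ` \<Omega>) - Inf (f ` \<Omega>)) / lam \<longrightarrow>
        MlowOn (closure \<Omega>) lam (ext_lower \<Omega> f) x = ext_lower \<Omega> f z + lam * (norm (z - x))^2 \<longrightarrow> z \<in> \<Omega>"
    using part2 unfolding e_def M_def m_def by blast
  show "\<forall>x\<in>\<Omega>. \<forall>z\<in>closure \<Omega>. (infdist x (frontier \<Omega>))^2 > 4 * (Sup (f ` \<Omega>) - Inf (f ` \<Omega>)) / lam \<longrightarrow>
        MupOn (closure \<Omega>) lam (MlowOn (closure \<Omega>) lam (ext_lower \<Omega> f)) x
          = MlowOn (closure \<Omega>) lam (ext_lower \<Omega> f) z - lam * (norm (z - x))^2 \<longrightarrow>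
        z \<in> \<Omega> \<and> (\<forall>y\<in>closure \<Omega>. MlowOn (closure \<Omega>) lam (ext_lower \<Omega> f) z
                  = ext_lower \<Omega> f y + lam * (norm (y - z))^2 \<longrightarrow> y \<in> \<Omega>)"
    using part3 unfolding e_def M_def m_def H_def by blast
qed


lemma Inf_neg: "Inf ((\<lambda>x. - f x) ` \<Omega>) = - Sup (f ` \<Omega> :: real set)"
  unfolding Inf_real_def by (simp add: image_image)

lemma Sup_neg: "Sup ((\<lambda>x. - f x) ` \<Omega>) = - Inf (f ` \<Omega> :: real set)"
  unfolding Inf_real_def by (simp add: image_image)

lemma ext_upper_neg: "ext_upper \<Omega> f = (\<lambda>x. - ext_lower \<Omega> (\<lambda>x. - f x) x)"
  unfolding ext_upper_def ext_lower_def Inf_neg by auto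

lemma MupOn_neg: "MupOn S lam (\<lambda>x. - g x) = (\<lambda>x. - MlowOn S lam g x)"
  unfolding MupOn_def MlowOn_def Inf_real_def by (simp add: image_image algebra_simps)

lemma MlowOn_neg: "MlowOn S lam (\<lambda>x. - g x) = (\<lambda>x. - MupOn S lam g x)"
  unfolding MupOn_def MlowOn_def Inf_real_def by (simp add: image_image algebra_simps)

lemma Mup_neg: "Mup lam (\<lambda>x. - g x) = (\<lambda>x. - Mlow lam g x)"
  unfolding Mup_On Mlow_On by (rule MupOn_neg)

lemma Mlow_neg: "Mlow lam (\<lambda>x. - g x) = (\<lambda>x. - Mup lam g x)"
  unfolding Mup_On Mlow_On by (rule MlowOn_neg)

lemma CuOn_neg: "CuOn S lam (\<lambda>x. - g x) = (\<lambda>x. - ClOn S lam g x)"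
  unfolding CuOn_def ClOn_def MupOn_neg MlowOn_neg ..

lemma Cu_neg: "Cu lam (\<lambda>x. - g x) = (\<lambda>x. - Cl lam g x)"
  unfolding Cu_def Cl_def by (simp add: add.commute)

lemma neq1: "(- a = - b - c) = (a = (b::real) + c)" by auto
lemma neq2: "(- a = - b + c) = (a = (b::real) - c)" by auto

lemma upper_main:
  fixes \<Omega> :: "'a::euclidean_space set" and f :: "'a \<Rightarrow> real"
  assumes op: "open \<Omega>" and ne: "\<Omega> \<noteq> {}" and bf: "bounded (f ` \<Omega>)" and lam: "lam > 0"
  shows "\<forall>x\<in>closure \<Omega>. MupOn (closure \<Omega>) lam (ext_upper \<Omega> f) x = Mup lam (ext_upper \<Omega> f) x
      \<and> MlowOn (closure \<Omega>) lam (MupOn (closure \<Omega>) lam (ext_upper \<Omega> f)) x = Mlow lam (Mup lam (ext_upper \<Omega> f)) x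
      \<and> CuOn (closure \<Omega>) lam (ext_upper \<Omega> f) x = Cu lam (ext_upper \<Omega> f) x"
  and "\<forall>x\<in>\<Omega>. \<forall>z\<in>closure \<Omega>. (infdist x (frontier \<Omega>))^2 > (Sup (f ` \<Omega>) - Inf (f ` \<Omega>)) / lam \<longrightarrow>
        MupOn (closure \<Omega>) lam (ext_upper \<Omega> f) x = ext_upper \<Omega> f z - lam * (norm (z - x))^2 \<longrightarrow> z \<in> \<Omega>"
  and "\<forall>x\<in>\<Omega>. \<forall>z\<in>closure \<Omega>. (infdist x (frontier \<Omega>))^2 > 4 * (Sup (f ` \<Omega>) - Inf (f ` \<Omega>)) / lam \<longrightarrow>
        MlowOn (closure \<Omega>) lam (MupOn (closure \<Omega>) lam (ext_upper \<Omega> f)) x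
          = MupOn (closure \<Omega>) lam (ext_upper \<Omega> f) z + lam * (norm (z - x))^2 \<longrightarrow>
        z \<in> \<Omega> \<and> (\<forall>y\<in>closure \<Omega>. MupOn (closure \<Omega>) lam (ext_upper \<Omega> f) z
                  = ext_upper \<Omega> f y - lam * (norm (y - z))^2 \<longrightarrow> y \<in> \<Omega>)"
proof -
  define g where "g = (\<lambda>x. - f x)"
  define e where "e = ext_lower \<Omega> g"
  have bg: "bounded (g ` \<Omega>)"
  proof -
    have "g ` \<Omega> = uminus ` (f ` \<Omega>)" unfolding g_def by (auto simp: image_image)
    then show ?thesis using bf by simp
  qed
  note U = lower_main[OF op ne bg lam, folded e_def]
  have Of: "Sup (g ` \<Omega>) - Inf (g ` \<Omega>) = Sup (f ` \<Omega>) - Inf (f ` \<Omega>)"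
    unfolding g_def Inf_neg Sup_neg by simp
  have eu: "ext_upper \<Omega> f = (\<lambda>x. - e x)"
    unfolding g_def e_def by (rule ext_upper_neg)
  show "\<forall>x\<in>closure \<Omega>. MupOn (closure \<Omega>) lam (ext_upper \<Omega> f) x = Mup lam (ext_upper \<Omega> f) x
      \<and> MlowOn (closure \<Omega>) lam (MupOn (closure \<Omega>) lam (ext_upper \<Omega> f)) x = Mlow lam (Mup lam (ext_upper \<Omega> f)) x
      \<and> CuOn (closure \<Omega>) lam (ext_upper \<Omega> f) x = Cu lam (ext_upper \<Omega> f) x"
    unfolding eu MupOn_neg MlowOn_neg Mup_neg Mlow_neg CuOn_neg Cu_neg neg_equal_iff_equal
    by (rule U(1))
  show "\<forall>x\<in>\<Omega>. \<forall>z\<in>closure \<Omega>. (infdist x (frontier \<Omega>))^2 > (Sup (f ` \<Omega>) - Inf (f ` \<Omega>)) / lam \<longrightarrow>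
        MupOn (closure \<Omega>) lam (ext_upper \<Omega> f) x = ext_upper \<Omega> f z - lam * (norm (z - x))^2 \<longrightarrow> z \<in> \<Omega>"
    unfolding eu MupOn_neg neq1 using U(2) unfolding Of .
  show "\<forall>x\<in>\<Omega>. \<forall>z\<in>closure \<Omega>. (infdist x (frontier \<Omega>))^2 > 4 * (Sup (f ` \<Omega>) - Inf (f ` \<Omega>)) / lam \<longrightarrow>
        MlowOn (closure \<Omega>) lam (MupOn (closure \<Omega>) lam (ext_upper \<Omega> f)) x
          = MupOn (closure \<Omega>) lam (ext_upper \<Omega> f) z + lam * (norm (z - x))^2 \<longrightarrow>
        z \<in> \<Omega> \<and> (\<forall>y\<in>closure \<Omega>. MupOn (closure \<Omega>) lam (ext_upper \<Omega> f) z
                  = ext_upper \<Omega> f y - lam * (norm (y - z))^2 \<longrightarrow> y \<in> \<Omega>)"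
    unfolding eu MupOn_neg MlowOn_neg neq1 neq2 using U(3) unfolding Of .
qed

theorem theorem3p1:
  fixes \<Omega> :: "'a::euclidean_space set" and f :: "'a \<Rightarrow> real" and lam :: real
  assumes "open \<Omega>" and "bounded \<Omega>" and "bounded (f ` \<Omega>)" and "lam > 0"
  shows "(\<forall>x\<in>closure \<Omega>.
            MlowOn (closure \<Omega>) lam (ext_lower \<Omega> f) x = Mlow lam (ext_lower \<Omega> f) x
          \<and> MupOn (closure \<Omega>) lam (ext_upper \<Omega> f) x = Mup lam (ext_upper \<Omega> f) x
          \<and> MupOn (closure \<Omega>) lam (MlowOn (closure \<Omega>) lam (ext_lower \<Omega> f)) x
              = Mup lam (Mlow lam (ext_lower \<Omega> f)) x
          \<and> MlowOn (closure \<Omega>) lam (MupOn (closure \<Omega>) lam (ext_upper \<Omega> f)) x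
              = Mlow lam (Mup lam (ext_upper \<Omega> f)) x
          \<and> ClOn (closure \<Omega>) lam (ext_lower \<Omega> f) x = Cl lam (ext_lower \<Omega> f) x
          \<and> CuOn (closure \<Omega>) lam (ext_upper \<Omega> f) x = Cu lam (ext_upper \<Omega> f) x)
    \<and> (\<forall>x\<in>\<Omega>. \<forall>z\<in>closure \<Omega>.
          (infdist x (frontier \<Omega>))^2 > (Sup (f ` \<Omega>) - Inf (f ` \<Omega>)) / lam \<longrightarrow>
          ((MlowOn (closure \<Omega>) lam (ext_lower \<Omega> f) x
              = ext_lower \<Omega> f z + lam * (norm (z - x))^2 \<longrightarrow> z \<in> \<Omega>)
         \<and> (MupOn (closure \<Omega>) lam (ext_upper \<Omega> f) x
              = ext_upper \<Omega> f z - lam * (norm (z - x))^2 \<longrightarrow> z \<in> \<Omega>)))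
    \<and> (\<forall>x\<in>\<Omega>. \<forall>z\<in>closure \<Omega>.
          (infdist x (frontier \<Omega>))^2 > 4 * (Sup (f ` \<Omega>) - Inf (f ` \<Omega>)) / lam \<longrightarrow>
          ((MupOn (closure \<Omega>) lam (MlowOn (closure \<Omega>) lam (ext_lower \<Omega> f)) x
              = MlowOn (closure \<Omega>) lam (ext_lower \<Omega> f) z - lam * (norm (z - x))^2 \<longrightarrow>
              z \<in> \<Omega> \<and>
              (\<forall>y\<in>closure \<Omega>. MlowOn (closure \<Omega>) lam (ext_lower \<Omega> f) z
                  = ext_lower \<Omega> f y + lam * (norm (y - z))^2 \<longrightarrow> y \<in> \<Omega>))
         \<and> (MlowOn (closure \<Omega>) lam (MupOn (closure \<Omega>) lam (ext_upper \<Omega> f)) x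
              = MupOn (closure \<Omega>) lam (ext_upper \<Omega> f) z + lam * (norm (z - x))^2 \<longrightarrow>
              z \<in> \<Omega> \<and>
              (\<forall>y\<in>closure \<Omega>. MupOn (closure \<Omega>) lam (ext_upper \<Omega> f) z
                  = ext_upper \<Omega> f y - lam * (norm (y - z))^2 \<longrightarrow> y \<in> \<Omega>))))"
proof (cases "\<Omega> = {}")
  case True then show ?thesis by simp
next
  case False
  note L = lower_main[OF assms(1) False assms(3) assms(4)]
  note U = upper_main[OF assms(1) False assms(3) assms(4)]
  show ?thesis using L U by blast
qed

end
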